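(* Suppose $F$ is symmetric around $1/2$, i.e., $F(y)=1-F(1-y)$ for all $y\in[0,1]$, and $|M|\ge4$. Then there exists $x\in(0,1/2)$ such that the strategy $\sigma_{\mathrm{ex}}(x)$ described below is a symmetric Bayesian Nash equilibrium strategy of the coordination game with two rounds of communication. Strategy $\sigma_{\mathrm{ex}}(x)$, using designated distinct messages $e,m_L,m_R$ and four further messages for a random bit (any other message is interpreted as a fixed designated message): Round 1: a type $u$ sends $e$ if $u\le x$ or $u>1-x$; $m_L$ if $x<u\le1/2$; $m_R$ if $1/2<u\le1-x$. After round-1 pair $(m_L,m_L)$: both play $L$. After $(m_R,m_R)$: both play $R$. After $(m_L,m_R)$ (either order): in round 2 each player sends an independent uniformly random bit, and both play $L$ if the bits differ and $R$ if they are equal. After $(e,m_L)$ or $(e,m_R)$ (either order): in round 2 the $e$-sender sends $m_L$ if her type is $\le1/2$ and $m_R$ otherwise, while the moderate sender repeats her round-1 message; the $e$-sender then plays $L$ iff her type is $\le1/2$, and the $m_L$-sender (resp. $m_R$-sender) plays $L$ iff the $e$-sender's round-2 message is $m_L$ (resp. plays $R$ iff it is $m_R$), so that both coordinate on the $e$-sender's preferred action. After $(e,e)$: round-2 messages are irrelevant and each player plays $L$ iff her type is $\le1/2$.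
   Context: Two players; types drawn independently from a distribution on $[0,1]$ with continuous CDF $F$ and density $f>0$ on $[0,1]$. Each chooses $L$ or $R$; a player of type $u$ gets $1-u$ if both choose $L$, $u$ if both choose $R$, and $0$ otherwise. Coordination game with two rounds of communication: after learning types, players simultaneously send publicly observed costless messages from a finite set $M$ in round 1, observe them, then simultaneously send messages from $M$ in round 2 (which may depend on own type and round-1 messages), observe them, and then choose actions (which may depend on own type and all messages). A symmetric strategy is a Bayesian Nash equilibrium strategy if, when the opponent uses it, no type of a player can obtain a strictly higher expected payoff by any other (message and action) behavior. *)

theory Defs
  imports "HOL-Probability.Probability"
begin

text \<open>Actions: True = L, False = R.  Payoff of a type u given own and opponent action.\<close>
definition coord_payoff :: "real \<Rightarrow> bool \<Rightarrow> bool \<Rightarrow> real" where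
  "coord_payoff u a b = (if a \<and> b then 1 - u else if \<not> a \<and> \<not> b then u else 0)"

text \<open>Behaviour of a player (of a given type): a (possibly mixed) round-1 message;
  a (possibly mixed) round-2 message depending on (own round-1, opponent round-1);
  a (possibly mixed) action depending on (own r1, opp r1, own r2, opp r2).\<close>
type_synonym 'm behavior =
  "'m pmf \<times> ('m \<Rightarrow> 'm \<Rightarrow> 'm pmf) \<times> ('m \<Rightarrow> 'm \<Rightarrow> 'm \<Rightarrow> 'm \<Rightarrow> bool pmf)"

definition outcome :: "'m behavior \<Rightarrow> 'm behavior \<Rightarrow> (bool \<times> bool) pmf" where
  "outcome b c =
     bind_pmf (fst b) (\<lambda>m1. bind_pmf (fst c) (\<lambda>n1.
     bind_pmf (fst (snd b) m1 n1) (\<lambda>m2. bind_pmf (fst (snd c) n1 m1) (\<lambda>n2.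
     bind_pmf (snd (snd b) m1 n1 m2 n2) (\<lambda>a. bind_pmf (snd (snd c) n1 m1 n2 m2) (\<lambda>a'.
     return_pmf (a, a')))))))"

definition pair_payoff :: "real \<Rightarrow> 'm behavior \<Rightarrow> 'm behavior \<Rightarrow> real" where
  "pair_payoff u b c = measure_pmf.expectation (outcome b c) (\<lambda>(a, a'). coord_payoff u a a')"

definition exp_payoff :: "(real \<Rightarrow> real) \<Rightarrow> real \<Rightarrow> 'm behavior \<Rightarrow> (real \<Rightarrow> 'm behavior) \<Rightarrow> real" where
  "exp_payoff f u b strat = (LINT v:{0..1}|lborel. f v * pair_payoff u b (strat v))"

definition sym_BNE :: "(real \<Rightarrow> real) \<Rightarrow> (real \<Rightarrow> 'm behavior) \<Rightarrow> bool" where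
  "sym_BNE f strat \<longleftrightarrow>
     (\<forall>u\<in>{0..1}. \<forall>b. exp_payoff f u b strat \<le> exp_payoff f u (strat u) strat)"

definition cdf_of :: "(real \<Rightarrow> real) \<Rightarrow> real \<Rightarrow> real" where
  "cdf_of f y = (LINT v:{0..y}|lborel. f v)"

text \<open>Round-1 messages other than mL, mR are read as e;
  in round 2 after a mixed (e, moderate) history, any message other than mR is read as mL;
  a bit message other than b1 is read as bit 0.\<close>
definition interp1 :: "'m \<Rightarrow> 'm \<Rightarrow> 'm \<Rightarrow> 'm \<Rightarrow> 'm" where
  "interp1 e mL mR m = (if m = mL then mL else if m = mR then mR else e)"

definition sigma_ex :: "'m \<Rightarrow> 'm \<Rightarrow> 'm \<Rightarrow> 'm \<Rightarrow> 'm \<Rightarrow> real \<Rightarrow> real \<Rightarrow> 'm behavior" where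
  "sigma_ex e mL mR b0 b1 x u =
    (return_pmf (if u \<le> x \<or> u > 1 - x then e else if u \<le> 1/2 then mL else mR),
     (\<lambda>o1 p1. let o' = interp1 e mL mR o1; p' = interp1 e mL mR p1 in
        if o' \<noteq> e \<and> p' \<noteq> e \<and> o' \<noteq> p' then pmf_of_set {b0, b1}
        else if o' = e \<and> p' \<noteq> e then return_pmf (if u \<le> 1/2 then mL else mR)
        else return_pmf o'),
     (\<lambda>o1 p1 o2 p2. let o' = interp1 e mL mR o1; p' = interp1 e mL mR p1 in
        return_pmf
         (if o' = e then u \<le> 1/2
          else if p' = e then p2 \<noteq> mR
          else if o' = p' then o' = mL
          else ((o2 = b1) \<noteq> (p2 = b1)))))"

end

theory Submission
  imports Defs
begin


lemma exp_bind_fin: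
  fixes p :: "'a::finite pmf" and g :: "'a \<Rightarrow> 'b::finite pmf" and h :: "'b \<Rightarrow> real"
  shows "measure_pmf.expectation (bind_pmf p g) h =
         measure_pmf.expectation p (\<lambda>a. measure_pmf.expectation (g a) h)"
  apply (subst pmf_expectation_bind[of UNIV])
  apply auto
  apply (subst (2) integral_measure_pmf[of UNIV])
  apply (auto simp: mult.commute)
  done

lemma exp_le_const:
  fixes p :: "'a::finite pmf" and g :: "'a \<Rightarrow> real"
  assumes "\<And>a. g a \<le> C"
  shows "measure_pmf.expectation p g \<le> C"
  by (rule measure_pmf.integral_le_const) (auto simp: assms integrable_measure_pmf_finite)

lemma exp_add:
  fixes p :: "'a::finite pmf" and g h :: "'a \<Rightarrow> real"
  shows "measure_pmf.expectation p g + measure_pmf.expectation p h = measure_pmf.expectation p (\<lambda>a. g a + h a)"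
  by (rule Bochner_Integration.integral_add[symmetric]) (auto simp: integrable_measure_pmf_finite)



lemma cp_le: "0 \<le> u \<Longrightarrow> u \<le> 1 \<Longrightarrow> coord_payoff u a t \<le> (if t then 1-u else u)"
  by (auto simp: coord_payoff_def)
lemma cp_le_max: "0 \<le> u \<Longrightarrow> u \<le> 1 \<Longrightarrow> coord_payoff u a t \<le> max u (1-u)"
  by (auto simp: coord_payoff_def)

lemma exp_bit:
  fixes p q :: "bool pmf"
  assumes "0 \<le> u" "u \<le> 1"
  shows "measure_pmf.expectation p (\<lambda>a. coord_payoff u a t) + measure_pmf.expectation q (\<lambda>a. coord_payoff u a (\<not>t)) \<le> 1"
proof -
  have "measure_pmf.expectation p (\<lambda>a. coord_payoff u a t) \<le> (if t then 1-u else u)"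
    by (rule exp_le_const) (rule cp_le[OF assms])
  moreover have "measure_pmf.expectation q (\<lambda>a. coord_payoff u a (\<not>t)) \<le> (if \<not>t then 1-u else u)"
    by (rule exp_le_const) (rule cp_le[OF assms])
  ultimately show ?thesis by (cases t) auto
qed

lemma exp_TF:
  fixes p :: "'m::finite pmf" and q :: "'m \<Rightarrow> bool pmf"
  assumes "0 \<le> u" "u \<le> 1"
  shows "measure_pmf.expectation p (\<lambda>a. measure_pmf.expectation (q a) (\<lambda>b. coord_payoff u b True)) +
         measure_pmf.expectation p (\<lambda>a. measure_pmf.expectation (q a) (\<lambda>b. coord_payoff u b False)) \<le> max u (1-u)"
  apply (subst exp_add)
  apply (rule exp_le_const)
  apply (subst exp_add)
  apply (rule exp_le_const)
  using assms by (auto simp: coord_payoff_def)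

context
  fixes e mL mR b0 b1 :: "'m::finite" and x u :: real
  assumes dist: "e \<noteq> mL" "e \<noteq> mR" "mL \<noteq> mR"
    and bd: "b0 \<noteq> b1" and x0: "0 < x" and x1: "x < 1/2" and u0: "0 \<le> u" and u1: "u \<le> 1"
begin

lemma dist2: "mL \<noteq> e" "mR \<noteq> e" "mR \<noteq> mL" using dist by auto

lemmas ev = pair_payoff_def outcome_def sigma_ex_def exp_bind_fin interp1_def Let_def integral_pmf_of_set dist dist2 bd

lemma devL:
  "pair_payoff u (return_pmf mL, s2, s3) (sigma_ex e mL mR b0 b1 x 0) \<le> 1 - u"
  "pair_payoff u (return_pmf mL, s2, s3) (sigma_ex e mL mR b0 b1 x (1/2)) \<le> 1 - u"
  "pair_payoff u (return_pmf mL, s2, s3) (sigma_ex e mL mR b0 b1 x (1-x)) \<le> 1/2"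
  "pair_payoff u (return_pmf mL, s2, s3) (sigma_ex e mL mR b0 b1 x 1) \<le> u"
  using x0 x1 u0 u1
  apply (simp_all add: ev)
  apply ((rule exp_TF; simp) | (rule exp_le_const, rule exp_bit; simp) | ((intro exp_le_const)+, simp add: coord_payoff_def max_def))+
  done

lemma devR:
  "pair_payoff u (return_pmf mR, s2, s3) (sigma_ex e mL mR b0 b1 x 0) \<le> 1 - u"
  "pair_payoff u (return_pmf mR, s2, s3) (sigma_ex e mL mR b0 b1 x (1/2)) \<le> 1/2"
  "pair_payoff u (return_pmf mR, s2, s3) (sigma_ex e mL mR b0 b1 x (1-x)) \<le> u"
  "pair_payoff u (return_pmf mR, s2, s3) (sigma_ex e mL mR b0 b1 x 1) \<le> u"
  using x0 x1 u0 u1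
  apply (simp_all add: ev)
  apply ((rule exp_TF; simp) | (rule exp_le_const, rule exp_bit; simp) | ((intro exp_le_const)+, simp add: coord_payoff_def max_def))+
  done

lemma devE:
  assumes "m \<noteq> mL" "m \<noteq> mR"
  shows
  "pair_payoff u (return_pmf m, s2, s3) (sigma_ex e mL mR b0 b1 x 0) + pair_payoff u (return_pmf m, s2, s3) (sigma_ex e mL mR b0 b1 x 1) \<le> max u (1-u)"
  "pair_payoff u (return_pmf m, s2, s3) (sigma_ex e mL mR b0 b1 x (1/2)) \<le> max u (1-u)"
  "pair_payoff u (return_pmf m, s2, s3) (sigma_ex e mL mR b0 b1 x (1-x)) \<le> max u (1-u)"
  using x0 x1 u0 u1 assms
  apply (simp_all add: ev)
  apply ((rule exp_TF; simp) | (rule exp_le_const, rule exp_bit; simp) | ((intro exp_le_const)+, simp add: coord_payoff_def max_def))+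
  done

lemma eqv:
  "pair_payoff u (sigma_ex e mL mR b0 b1 x u) (sigma_ex e mL mR b0 b1 x 0) = (if u \<le> 1-x then 1-u else 0)"
  "pair_payoff u (sigma_ex e mL mR b0 b1 x u) (sigma_ex e mL mR b0 b1 x (1/2)) = (if u \<le> 1/2 then 1-u else if u \<le> 1-x then 1/2 else u)"
  "pair_payoff u (sigma_ex e mL mR b0 b1 x u) (sigma_ex e mL mR b0 b1 x (1-x)) = (if u \<le> x then 1-u else if u \<le> 1/2 then 1/2 else u)"
  "pair_payoff u (sigma_ex e mL mR b0 b1 x u) (sigma_ex e mL mR b0 b1 x 1) = (if u \<le> x then 0 else u)"
  using x0 x1 u0 u1
  apply (simp_all add: ev)
  apply (auto simp: coord_payoff_def)
  done

end


lemma ind_int: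
  fixes f :: "real \<Rightarrow> real"
  assumes fi: "set_integrable lborel {0..1} f" and t: "0 \<le> t" "t \<le> 1"
  shows "set_integrable lborel {0..1} (\<lambda>v. f v * indicator {..t} v)"
    and "(LINT v:{0..1}|lborel. f v * indicator {..t} v) = cdf_of f t"
proof -
  have eq: "\<And>v. indicator {0..1} v *\<^sub>R (f v * indicator {..t} v) = indicator {0..t} v *\<^sub>R f v"
    using t by (auto simp: indicator_def)
  have "set_integrable lborel {0..t} f"
    by (rule set_integrable_subset[OF fi]) (use t in auto)
  then show "set_integrable lborel {0..1} (\<lambda>v. f v * indicator {..t} v)"
    unfolding set_integrable_def eq .
  show "(LINT v:{0..1}|lborel. f v * indicator {..t} v) = cdf_of f t"
    unfolding set_lebesgue_integral_def cdf_of_def eq ..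
qed

lemma step_int:
  fixes f g :: "real \<Rightarrow> real"
  assumes fi: "set_integrable lborel {0..1} f"
    and abc: "0 \<le> a" "a \<le> b" "b \<le> c" "c \<le> 1"
    and g: "\<And>v. v \<in> {0..1} \<Longrightarrow> g v = (if v \<le> a then g1 else if v \<le> b then g2 else if v \<le> c then g3 else g4)"
  shows "(LINT v:{0..1}|lborel. f v * g v) =
     g1 * cdf_of f a + g2 * (cdf_of f b - cdf_of f a) + g3 * (cdf_of f c - cdf_of f b) + g4 * (cdf_of f 1 - cdf_of f c)"
proof -
  have "(LINT v:{0..1}|lborel. f v * g v) = (LINT v:{0..1}|lborel.
      g4 * f v + ((g3 - g4) * (f v * indicator {..c} v) + ((g2 - g3) * (f v * indicator {..b} v)
       + (g1 - g2) * (f v * indicator {..a} v))))"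
    apply (rule set_lebesgue_integral_cong)
     apply simp
    using abc by (auto simp: g indicator_def algebra_simps)
  also have "\<dots> = g4 * (LINT v:{0..1}|lborel. f v) + ((g3 - g4) * cdf_of f c + ((g2 - g3) * cdf_of f b
       + (g1 - g2) * cdf_of f a))"
    using abc
    by (simp add: set_integral_add ind_int[OF fi] fi set_integrable_mult_right)
  also have "(LINT v:{0..1}|lborel. f v) = cdf_of f 1" by (simp add: cdf_of_def)
  finally show ?thesis by (simp add: algebra_simps)
qed

lemma cdf_cont:
  fixes f :: "real \<Rightarrow> real"
  assumes fi: "set_integrable lborel {0..1} f"
  shows "continuous_on {0..1} (cdf_of f)"
proof -
  have hk: "f integrable_on {0..1}" using set_borel_integral_eq_integral(1)[OF fi] .
  have "\<And>y. y \<in> {0..1} \<Longrightarrow> cdf_of f y = integral {0..y} f"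
  proof -
    fix y :: real assume y: "y \<in> {0..1}"
    have "set_integrable lborel {0..y} f"
      by (rule set_integrable_subset[OF fi]) (use y in auto)
    then show "cdf_of f y = integral {0..y} f"
      unfolding cdf_of_def by (rule set_borel_integral_eq_integral(2))
  qed
  then show ?thesis
    using continuous_on_cong[OF refl] indefinite_integral_continuous_1[OF hk] by metis
qed

lemma cdf0: "cdf_of f 0 = 0"
proof -
  have "AE v in lborel. indicator {0::real} v *\<^sub>R f v = 0"
    using AE_lborel_singleton[of 0] by eventually_elim (auto simp: indicator_def)
  then have "(\<integral>v. indicator {0::real} v *\<^sub>R f v \<partial>lborel) = 0"
    by (rule integral_eq_zero_AE)
  then show ?thesis by (simp add: cdf_of_def set_lebesgue_integral_def)
qed



lemma decomp:
  fixes p1 :: "'m::finite pmf"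
  shows "pair_payoff u (p1, s2, s3) c = measure_pmf.expectation p1 (\<lambda>m. pair_payoff u (return_pmf m, s2, s3) c)"
  unfolding pair_payoff_def outcome_def by (simp add: exp_bind_fin)

lemma sig_step:
  assumes "0 < x" "x < 1/2"
  shows "sigma_ex e mL mR b0 b1 x v = (if v \<le> x then sigma_ex e mL mR b0 b1 x 0
     else if v \<le> 1/2 then sigma_ex e mL mR b0 b1 x (1/2)
     else if v \<le> 1-x then sigma_ex e mL mR b0 b1 x (1-x) else sigma_ex e mL mR b0 b1 x 1)"
proof (cases "v \<le> x")
  case True
  then have h: "(v \<le> 1/2) = True" using assms by simp
  show ?thesis using True assms by (simp add: sigma_ex_def Let_def h cong: if_cong)
next
  case F1: False
  show ?thesis
  proof (cases "v \<le> 1/2")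
    case True
    then show ?thesis using F1 assms by (simp add: sigma_ex_def Let_def cong: if_cong)
  next
    case F2: False
    have "\<not> (1 - x \<le> 1/2)" "\<not> (1::real) \<le> 1/2" using assms by auto
    then show ?thesis using F1 F2 assms by (simp add: sigma_ex_def Let_def cong: if_cong)
  qed
qed

lemma lin4:
  fixes p :: "'a::finite pmf" and x :: real
  shows "(1/2-x) * measure_pmf.expectation p g1 + x * measure_pmf.expectation p g2 + x * measure_pmf.expectation p g3
    + (1/2-x) * measure_pmf.expectation p g4 =
    measure_pmf.expectation p (\<lambda>m. (1/2-x) * (g1 m + g4 m) + x * g2 m + x * g3 m)"
  by (simp add: integrable_measure_pmf_finite algebra_simps)

definition Vf :: "real \<Rightarrow> real \<Rightarrow> real" where
  "Vf x u = (1/2-x)*(if u \<le> 1-x then 1-u else 0) + x*(if u\<le>1/2 then 1-u else if u \<le> 1-x then 1/2 else u)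
    + x*(if u\<le>x then 1-u else if u \<le>1/2 then 1/2 else u) + (1/2-x)*(if u \<le> x then 0 else u)"

lemma prods:
  fixes x u :: real
  assumes "0 < x" "x < 1/2" "0 \<le> u" "u \<le> 1"
  shows "0 \<le> x*u" "x*u \<le> u/2" "x*u \<le> x" "u \<le> 1/2 \<Longrightarrow> x*u \<le> x/2" "u \<ge> 1/2 \<Longrightarrow> x*u \<ge> x/2"
    "u \<le> x \<Longrightarrow> x*u \<le> x*x" "u \<ge> 1-x \<Longrightarrow> x*u \<ge> x*(1-x)"
proof -
  show "0 \<le> x*u" using assms by simp
  show "x*u \<le> u/2" using mult_right_mono[of x "1/2" u] assms by simp
  show "x*u \<le> x" using mult_left_mono[of u 1 x] assms by simp
  show "u \<le> 1/2 \<Longrightarrow> x*u \<le> x/2" using mult_left_mono[of u "1/2" x] assms by simp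
  show "u \<ge> 1/2 \<Longrightarrow> x*u \<ge> x/2" using mult_left_mono[of "1/2" u x] assms by simp
  show "u \<le> x \<Longrightarrow> x*u \<le> x*x" using mult_left_mono[of u x x] assms by simp
  show "u \<ge> 1-x \<Longrightarrow> x*u \<ge> x*(1-x)" using mult_left_mono[of "1-x" u x] assms by simp
qed

lemma Vf_cases:
  fixes x u :: real
  assumes "0 < x" "x < 1/2" "0 \<le> u" "u \<le> 1"
  shows "u \<le> x \<Longrightarrow> Vf x u = 1/2 + x - u/2 - x*u"
    "x < u \<Longrightarrow> u \<le> 1/2 \<Longrightarrow> Vf x u = 1/2 + x/2 - x*u"
    "1/2 < u \<Longrightarrow> u \<le> 1-x \<Longrightarrow> Vf x u = 1/2 - x/2 + x*u"
    "1-x < u \<Longrightarrow> Vf x u = u/2 + x*u"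
  using assms by (auto simp: Vf_def algebra_simps diff_divide_distrib add_divide_distrib)

lemma Vf_le:
  fixes x u B :: real
  assumes a: "0 < x" "x < 1/2" "0 \<le> u" "u \<le> 1"
    and c1: "u \<le> x \<Longrightarrow> x*u \<le> u/2 \<Longrightarrow> B \<le> 1/2 + x - u/2 - x*u"
    and c2: "x < u \<Longrightarrow> u \<le> 1/2 \<Longrightarrow> x*u \<le> x/2 \<Longrightarrow> B \<le> 1/2 + x/2 - x*u"
    and c3: "1/2 < u \<Longrightarrow> u \<le> 1-x \<Longrightarrow> x/2 \<le> x*u \<Longrightarrow> B \<le> 1/2 - x/2 + x*u"
    and c4: "1-x < u \<Longrightarrow> x/2 \<le> x*u \<Longrightarrow> B \<le> u/2 + x*u"
  shows "B \<le> Vf x u"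
proof -
  consider "u \<le> x" | "x < u" "u \<le> 1/2" | "1/2 < u" "u \<le> 1-x" | "1-x < u" by linarith
  then show ?thesis
  proof cases
    case 1 then show ?thesis using c1[OF 1 prods(2)[OF a]] Vf_cases(1)[OF a 1] by simp
  next
    case 2 then show ?thesis using c2[OF 2 prods(4)[OF a 2(2)]] Vf_cases(2)[OF a 2] by simp
  next
    case 3
    then have "1/2 \<le> u" by simp
    then show ?thesis using c3[OF 3 prods(5)[OF a]] Vf_cases(3)[OF a 3] by simp
  next
    case 4
    then have "1/2 \<le> u" using a(2) by linarith
    then show ?thesis using c4[OF 4 prods(5)[OF a]] Vf_cases(4)[OF a 4] by simp
  qed
qed

lemma arithL:
  assumes a: "0 < x" "x < 1/2" "0 \<le> u" "u \<le> 1" and "P1 \<le> 1-u" "P2 \<le> 1-u" "P3 \<le> 1/2" "P4 \<le> u"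
  shows "(1/2-x)*(P1+P4) + x*P2 + x*P3 \<le> Vf x u"
proof -
  have "(1/2-x)*(P1+P4) + x*P2 + x*P3 \<le> (1/2-x)*((1-u)+u) + x*(1-u) + x*(1/2)"
    using assms by (intro add_mono mult_left_mono) auto
  also have "\<dots> = 1/2 + x/2 - x*u" by (simp add: algebra_simps)
  also have "\<dots> \<le> Vf x u"
    apply (rule Vf_le[OF a])
    using prods[OF a] by linarith+
  finally show ?thesis .
qed

lemma arithR:
  assumes a: "0 < x" "x < 1/2" "0 \<le> u" "u \<le> 1" and "P1 \<le> 1-u" "P2 \<le> 1/2" "P3 \<le> u" "P4 \<le> u"
  shows "(1/2-x)*(P1+P4) + x*P2 + x*P3 \<le> Vf x u"
proof -
  have "(1/2-x)*(P1+P4) + x*P2 + x*P3 \<le> (1/2-x)*((1-u)+u) + x*(1/2) + x*u"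
    using assms by (intro add_mono mult_left_mono) auto
  also have "\<dots> = 1/2 - x/2 + x*u" by (simp add: algebra_simps)
  also have "\<dots> \<le> Vf x u"
    apply (rule Vf_le[OF a])
    using prods[OF a] by linarith+
  finally show ?thesis .
qed

lemma arithE:
  assumes a: "0 < x" "x < 1/2" "0 \<le> u" "u \<le> 1" and "P1 + P4 \<le> max u (1-u)" "P2 \<le> max u (1-u)" "P3 \<le> max u (1-u)"
  shows "(1/2-x)*(P1+P4) + x*P2 + x*P3 \<le> Vf x u"
proof -
  have "(1/2-x)*(P1+P4) + x*P2 + x*P3 \<le> (1/2-x)*max u (1-u) + x*max u (1-u) + x*max u (1-u)"
    using assms by (intro add_mono mult_left_mono) auto
  also have "\<dots> = max u (1-u) * (1/2 + x)" by (simp add: algebra_simps)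
  also have "\<dots> \<le> Vf x u"
  proof (cases "u \<le> 1/2")
    case True
    then have "max u (1-u) * (1/2 + x) = 1/2 + x - u/2 - x*u" by (simp add: max_def algebra_simps diff_divide_distrib add_divide_distrib)
    then show ?thesis
      apply -
      apply (rule Vf_le[OF a])
      using True a prods[OF a] by linarith+
  next
    case False
    then have "max u (1-u) * (1/2 + x) = u/2 + x*u" by (simp add: max_def algebra_simps diff_divide_distrib add_divide_distrib)
    then show ?thesis
      apply -
      apply (rule Vf_le[OF a])
      using False a prods[OF a] by linarith+
  qed
  finally show ?thesis .
qed


theorem mainTheorem10:
  fixes f :: "real \<Rightarrow> real"
    and e mL mR b0 b1 :: "'m::finite"
  assumes f_meas: "f \<in> borel_measurable lborel"
    and f_pos: "\<forall>v\<in>{0..1}. f v > 0"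
    and f_int: "set_integrable lborel {0..1} f"
    and f_total: "(LINT v:{0..1}|lborel. f v) = 1"
    and F_sym: "\<forall>y\<in>{0..1}. cdf_of f y = 1 - cdf_of f (1 - y)"
    and M_card: "CARD('m) \<ge> 4"
    and distinct_msgs: "distinct [e, mL, mR]"
    and bits_distinct: "b0 \<noteq> b1"
  shows "\<exists>x\<in>{0<..<1/2}. sym_BNE f (sigma_ex e mL mR b0 b1 x)"
proof -
  let ?F = "cdf_of f"
  have dist: "e \<noteq> mL" "e \<noteq> mR" "mL \<noteq> mR" using distinct_msgs by auto
  have cont: "continuous_on {0..1} ?F" by (rule cdf_cont[OF f_int])
  have F0: "?F 0 = 0" by (rule cdf0)
  have Fh: "?F (1/2) = 1/2" using F_sym[rule_format, of "1/2"] by simp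
  have F1: "?F 1 = 1" using f_total by (simp add: cdf_of_def)
  have "continuous_on {0..1/2} (\<lambda>y. ?F y + y)"
    by (intro continuous_intros continuous_on_subset[OF cont]) auto
  then obtain x where x: "0 \<le> x" "x \<le> 1/2" "?F x + x = 1/2"
    using IVT'[of "\<lambda>y. ?F y + y" 0 "1/2" "1/2"] F0 Fh by auto
  have x0: "0 < x" using x F0 by (cases "x = 0") auto
  have x1: "x < 1/2" using x Fh by (cases "x = 1/2") auto
  have Fx: "?F x = 1/2 - x" using x by simp
  have F1x: "?F (1-x) = 1/2 + x" using F_sym[rule_format, of x] x Fx by simp
  let ?s = "sigma_ex e mL mR b0 b1 x"
  have gen: "exp_payoff f u d ?s = (1/2-x)*pair_payoff u d (?s 0) + x * pair_payoff u d (?s (1/2))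
      + x * pair_payoff u d (?s (1-x)) + (1/2-x) * pair_payoff u d (?s 1)" for u d
  proof -
    have "exp_payoff f u d ?s = pair_payoff u d (?s 0) * ?F x + pair_payoff u d (?s (1/2)) * (?F (1/2) - ?F x)
       + pair_payoff u d (?s (1-x)) * (?F (1-x) - ?F (1/2)) + pair_payoff u d (?s 1) * (?F 1 - ?F (1-x))"
      unfolding exp_payoff_def
    proof (rule step_int[OF f_int])
      show "0 \<le> x" "x \<le> 1/2" "1/2 \<le> 1-x" "1-x \<le> (1::real)" using x0 x1 by auto
      fix v :: real
      have "?s v = (if v \<le> x then ?s 0 else if v \<le> 1/2 then ?s (1/2) else if v \<le> 1-x then ?s (1-x) else ?s 1)"
        by (rule sig_step[OF x0 x1])
      then show "pair_payoff u d (?s v) = (if v \<le> x then pair_payoff u d (?s 0) else if v \<le> 1/2 then pair_payoff u d (?s (1/2))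
        else if v \<le> 1-x then pair_payoff u d (?s (1-x)) else pair_payoff u d (?s 1))"
        by simp
    qed
    then show ?thesis using Fx Fh F1x F1 by (simp add: algebra_simps)
  qed
  show ?thesis
  proof (rule bexI[of _ x])
    show "x \<in> {0<..<1/2}" using x0 x1 by simp
    show "sym_BNE f ?s"
      unfolding sym_BNE_def
    proof (intro ballI allI)
      fix u :: real and b :: "'m behavior" assume u: "u \<in> {0..1}"
      then have u0: "0 \<le> u" and u1: "u \<le> 1" by auto
      obtain p1 s2 s3 where b: "b = (p1, s2, s3)" by (cases b) auto
      let ?P = "\<lambda>m v. pair_payoff u (return_pmf m, s2, s3) (?s v)"
      have "exp_payoff f u b ?s = measure_pmf.expectation p1
          (\<lambda>m. (1/2-x) * (?P m 0 + ?P m 1) + x * ?P m (1/2) + x * ?P m (1-x))"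
        unfolding gen b decomp[of u p1 s2 s3] by (rule lin4)
      also have "\<dots> \<le> Vf x u"
      proof (rule exp_le_const)
        fix m
        consider "m = mL" | "m = mR" | "m \<noteq> mL" "m \<noteq> mR" by blast
        then show "(1/2-x) * (?P m 0 + ?P m 1) + x * ?P m (1/2) + x * ?P m (1-x) \<le> Vf x u"
        proof cases
          case 1
          note d = devL[OF dist bits_distinct x0 x1 u0 u1, of s2 s3]
          show ?thesis unfolding 1 by (rule arithL[OF x0 x1 u0 u1 d(1) d(2) d(3) d(4)])
        next
          case 2
          note d = devR[OF dist bits_distinct x0 x1 u0 u1, of s2 s3]
          show ?thesis unfolding 2 by (rule arithR[OF x0 x1 u0 u1 d(1) d(2) d(3) d(4)])
        next
          case 3
          note d = devE[OF dist bits_distinct x0 x1 u0 u1 3, of s2 s3]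
          show ?thesis by (rule arithE[OF x0 x1 u0 u1 d(1) d(2) d(3)])
        qed
      qed
      also have "Vf x u = exp_payoff f u (?s u) ?s"
        unfolding gen eqv[OF dist bits_distinct x0 x1 u0 u1] Vf_def by simp
      finally show "exp_payoff f u b ?s \<le> exp_payoff f u (?s u) ?s" .
    qed
  qed
qed

end
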